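(* Take a Moore-Penrose dagger category $(\mathbb{X}, \dagger)$ with a \dag-positive map $\begin{bmatrix} \alpha & \beta \\ \beta^\dagger & \delta \end{bmatrix}$ such that $\alpha$ is an isomorphism. Then $\beta^\dagger \circ \alpha^{-1}$ is its unique conditional generator. Therefore, for every object $X \in \mathbb{X}$, if $F= \left( \begin{bmatrix} f \\ g \end{bmatrix}, \begin{bmatrix} \alpha & \beta \\ \beta^\dagger & \delta \end{bmatrix}, \begin{bmatrix} s \\ t \end{bmatrix} \right)$ is a map in $\mathfrak{G}\left[ (\mathbb{X}, \dagger) \right]_X$, then $F\vert_B = \left( \begin{bmatrix} \beta^\dagger \circ \alpha^\circ & g - \beta^\dagger \circ \alpha^\circ \circ f \end{bmatrix}, \delta - \beta^\dagger \circ \alpha^\circ \circ \beta, t - \beta^\dagger \circ \alpha^\circ \circ s \right)$ is its unique conditional.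
   Context: Here $(\mathbb{X}, \dagger)$ is a dagger additive category (a dagger category enriched in abelian groups with additive dagger and finite biproducts satisfying $\pi_j^\dagger = \iota_j$; maps between biproducts are written as matrices, the dagger acting as conjugate transpose) in which every map $f$ has a Moore-Penrose inverse $f^\circ$, i.e. $f \circ f^\circ \circ f = f$, $f^\circ \circ f \circ f^\circ = f^\circ$, $(f \circ f^\circ)^\dagger = f \circ f^\circ$, $(f^\circ \circ f)^\dagger = f^\circ \circ f$. A map $p$ is $\dagger$-positive if $p = \phi^\dagger \circ \phi$ for some $\phi$. The map $\begin{bmatrix} \alpha & \beta \\ \beta^\dagger & \delta \end{bmatrix}: B \oplus C \to B \oplus C$ has $\alpha: B \to B$, $\beta: C \to B$, $\delta: C \to C$. A conditional generator for it is a map $m: B \to C$ with $m \circ \alpha = \beta^\dagger$ and $\delta - m \circ \beta$ $\dagger$-positive. For an object $X$, the Gauss construction $\mathfrak{G}\left[ (\mathbb{X}, \dagger) \right]_X$ is the Markov category with the objects of $\mathbb{X}$, maps $A \to B$ the triples $(f,p,x)$ with $f: A \to B$, $p: B \to B$ $\dagger$-positive, $x: X \to B$; identities $\mathsf{Id}_A = (\mathsf{id}_A,0,0)$; composition $(g,q,y) \circ (f,p,x) = (g \circ f, q + g \circ p \circ g^\dagger, y + g \circ x)$; $A \otimes B = A \oplus B$, $(f,p,x) \otimes (g,q,y) = \left(f \oplus g, p \oplus q, \begin{bmatrix} x \\ y \end{bmatrix}\right)$; copy $\mathsf{copy}_A = \left(\begin{bmatrix} \mathsf{id}_A \\ \mathsf{id}_A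 \end{bmatrix}, 0, 0\right)$, delete $\mathsf{del}_A = (0,0,0): A \to \mathsf{0}$. In $F: A \to B \otimes C$, $f: A \to B$, $g: A \to C$, $s: X \to B$, $t: X \to C$. A map $G: B \otimes A \to C$ is a conditional of $F$ if $(\mathsf{Id}_B \otimes G) \circ (\mathsf{copy}_B \otimes \mathsf{Id}_A) \circ (\mathsf{Id}_B \otimes \mathsf{del}_C \otimes \mathsf{Id}_A) \circ (F \otimes \mathsf{Id}_A) \circ \mathsf{copy}_A = F$. *)

theory Defs
  imports Main
begin

text \<open>Cmp g f is the composite g after f.
  Zer A B is the zero map A to B, Bip A B the biproduct with injections In1, In2
  and projections Pr1, Pr2, and Zob the zero object (nullary biproduct).\<close>

record ('o, 'm) dac =
  Dom :: "'m \<Rightarrow> 'o"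
  Cod :: "'m \<Rightarrow> 'o"
  Cmp :: "'m \<Rightarrow> 'm \<Rightarrow> 'm"
  Idm :: "'o \<Rightarrow> 'm"
  Dag :: "'m \<Rightarrow> 'm"
  Zer :: "'o \<Rightarrow> 'o \<Rightarrow> 'm"
  Add :: "'m \<Rightarrow> 'm \<Rightarrow> 'm"
  Neg :: "'m \<Rightarrow> 'm"
  Bip :: "'o \<Rightarrow> 'o \<Rightarrow> 'o"
  In1 :: "'o \<Rightarrow> 'o \<Rightarrow> 'm"
  In2 :: "'o \<Rightarrow> 'o \<Rightarrow> 'm"
  Pr1 :: "'o \<Rightarrow> 'o \<Rightarrow> 'm"
  Pr2 :: "'o \<Rightarrow> 'o \<Rightarrow> 'm"
  Zob :: 'o

definition hom :: "('o, 'm) dac \<Rightarrow> 'o \<Rightarrow> 'o \<Rightarrow> 'm set" where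
  "hom K A B = {f. Dom K f = A \<and> Cod K f = B}"

definition Sub :: "('o, 'm) dac \<Rightarrow> 'm \<Rightarrow> 'm \<Rightarrow> 'm" where
  "Sub K f g = Add K f (Neg K g)"

locale dagger_additive_cat =
  fixes K :: "('o, 'm) dac"
  assumes id_hom: "Idm K A \<in> hom K A A"
    and comp_hom: "f \<in> hom K A B \<Longrightarrow> g \<in> hom K B D \<Longrightarrow> Cmp K g f \<in> hom K A D"
    and id_left: "f \<in> hom K A B \<Longrightarrow> Cmp K (Idm K B) f = f"
    and id_right: "f \<in> hom K A B \<Longrightarrow> Cmp K f (Idm K A) = f"
    and comp_assoc: "f \<in> hom K A B \<Longrightarrow> g \<in> hom K B D \<Longrightarrow> h \<in> hom K D E \<Longrightarrow>
        Cmp K h (Cmp K g f) = Cmp K (Cmp K h g) f"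
    and dag_hom: "f \<in> hom K A B \<Longrightarrow> Dag K f \<in> hom K B A"
    and dag_dag: "f \<in> hom K A B \<Longrightarrow> Dag K (Dag K f) = f"
    and dag_id: "Dag K (Idm K A) = Idm K A"
    and dag_comp: "f \<in> hom K A B \<Longrightarrow> g \<in> hom K B D \<Longrightarrow>
        Dag K (Cmp K g f) = Cmp K (Dag K f) (Dag K g)"
    and zer_hom: "Zer K A B \<in> hom K A B"
    and add_hom: "f \<in> hom K A B \<Longrightarrow> g \<in> hom K A B \<Longrightarrow> Add K f g \<in> hom K A B"
    and neg_hom: "f \<in> hom K A B \<Longrightarrow> Neg K f \<in> hom K A B"
    and add_assoc: "f \<in> hom K A B \<Longrightarrow> g \<in> hom K A B \<Longrightarrow> h \<in> hom K A B \<Longrightarrow>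
        Add K (Add K f g) h = Add K f (Add K g h)"
    and add_comm: "f \<in> hom K A B \<Longrightarrow> g \<in> hom K A B \<Longrightarrow> Add K f g = Add K g f"
    and add_zero: "f \<in> hom K A B \<Longrightarrow> Add K f (Zer K A B) = f"
    and add_neg: "f \<in> hom K A B \<Longrightarrow> Add K f (Neg K f) = Zer K A B"
    and comp_add_left: "f \<in> hom K A B \<Longrightarrow> g \<in> hom K A B \<Longrightarrow> h \<in> hom K B D \<Longrightarrow>
        Cmp K h (Add K f g) = Add K (Cmp K h f) (Cmp K h g)"
    and comp_add_right: "f \<in> hom K B D \<Longrightarrow> g \<in> hom K B D \<Longrightarrow> h \<in> hom K A B \<Longrightarrow>
        Cmp K (Add K f g) h = Add K (Cmp K f h) (Cmp K g h)"
    and dag_add: "f \<in> hom K A B \<Longrightarrow> g \<in> hom K A B \<Longrightarrow>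
        Dag K (Add K f g) = Add K (Dag K f) (Dag K g)"
    and in1_hom: "In1 K A B \<in> hom K A (Bip K A B)"
    and in2_hom: "In2 K A B \<in> hom K B (Bip K A B)"
    and pr1_hom: "Pr1 K A B \<in> hom K (Bip K A B) A"
    and pr2_hom: "Pr2 K A B \<in> hom K (Bip K A B) B"
    and pr1_in1: "Cmp K (Pr1 K A B) (In1 K A B) = Idm K A"
    and pr2_in2: "Cmp K (Pr2 K A B) (In2 K A B) = Idm K B"
    and pr1_in2: "Cmp K (Pr1 K A B) (In2 K A B) = Zer K B A"
    and pr2_in1: "Cmp K (Pr2 K A B) (In1 K A B) = Zer K A B"
    and bip_sum: "Add K (Cmp K (In1 K A B) (Pr1 K A B)) (Cmp K (In2 K A B) (Pr2 K A B))
        = Idm K (Bip K A B)"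
    and dag_pr1: "Dag K (Pr1 K A B) = In1 K A B"
    and dag_pr2: "Dag K (Pr2 K A B) = In2 K A B"
    and zero_obj: "Idm K (Zob K) = Zer K (Zob K) (Zob K)"

definition is_mp_inverse :: "('o, 'm) dac \<Rightarrow> 'm \<Rightarrow> 'm \<Rightarrow> bool" where
  "is_mp_inverse K f g \<longleftrightarrow> g \<in> hom K (Cod K f) (Dom K f)
     \<and> Cmp K (Cmp K f g) f = f
     \<and> Cmp K (Cmp K g f) g = g
     \<and> Dag K (Cmp K f g) = Cmp K f g
     \<and> Dag K (Cmp K g f) = Cmp K g f"

locale mp_dagger_additive_cat = dagger_additive_cat +
  assumes mp_exists: "\<exists>g. is_mp_inverse K f g"

text \<open>The Moore-Penrose inverse f\<degree> (unique when it exists).\<close>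
definition mpinv :: "('o, 'm) dac \<Rightarrow> 'm \<Rightarrow> 'm" where
  "mpinv K f = (SOME g. is_mp_inverse K f g)"

definition is_iso :: "('o, 'm) dac \<Rightarrow> 'o \<Rightarrow> 'o \<Rightarrow> 'm \<Rightarrow> bool" where
  "is_iso K A B a \<longleftrightarrow> a \<in> hom K A B \<and>
     (\<exists>b \<in> hom K B A. Cmp K b a = Idm K A \<and> Cmp K a b = Idm K B)"

definition inv_map :: "('o, 'm) dac \<Rightarrow> 'm \<Rightarrow> 'm" where
  "inv_map K a = (SOME b. b \<in> hom K (Cod K a) (Dom K a) \<and>
     Cmp K b a = Idm K (Dom K a) \<and> Cmp K a b = Idm K (Cod K a))"

definition dpos :: "('o, 'm) dac \<Rightarrow> 'o \<Rightarrow> 'm \<Rightarrow> bool" where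
  "dpos K B p \<longleftrightarrow> p \<in> hom K B B \<and> (\<exists>\<phi>. Dom K \<phi> = B \<and> p = Cmp K (Dag K \<phi>) \<phi>)"

definition col :: "('o, 'm) dac \<Rightarrow> 'm \<Rightarrow> 'm \<Rightarrow> 'm" where
  "col K f g = Add K (Cmp K (In1 K (Cod K f) (Cod K g)) f) (Cmp K (In2 K (Cod K f) (Cod K g)) g)"

definition row :: "('o, 'm) dac \<Rightarrow> 'm \<Rightarrow> 'm \<Rightarrow> 'm" where
  "row K h k = Add K (Cmp K h (Pr1 K (Dom K h) (Dom K k))) (Cmp K k (Pr2 K (Dom K h) (Dom K k)))"

text \<open>The 2x2 matrix [[a, b], [c, d]] : A1 \<oplus> A2 \<rightarrow> B1 \<oplus> B2 with
  a : A1 \<rightarrow> B1, b : A2 \<rightarrow> B1, c : A1 \<rightarrow> B2, d : A2 \<rightarrow> B2.\<close>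
definition mat2 :: "('o, 'm) dac \<Rightarrow> 'm \<Rightarrow> 'm \<Rightarrow> 'm \<Rightarrow> 'm \<Rightarrow> 'm" where
  "mat2 K a b c d = col K (row K a b) (row K c d)"

definition dsum :: "('o, 'm) dac \<Rightarrow> 'm \<Rightarrow> 'm \<Rightarrow> 'm" where
  "dsum K f g = mat2 K f (Zer K (Dom K g) (Cod K f)) (Zer K (Dom K f) (Cod K g)) g"

definition cond_gen :: "('o, 'm) dac \<Rightarrow> 'm \<Rightarrow> 'm \<Rightarrow> 'm \<Rightarrow> 'm \<Rightarrow> bool" where
  "cond_gen K \<alpha> \<beta> \<delta> m \<longleftrightarrow> m \<in> hom K (Dom K \<alpha>) (Dom K \<beta>)
     \<and> Cmp K m \<alpha> = Dag K \<beta>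
     \<and> dpos K (Dom K \<beta>) (Sub K \<delta> (Cmp K m \<beta>))"

type_synonym 'm gmap = "'m \<times> 'm \<times> 'm"

definition ghom :: "('o, 'm) dac \<Rightarrow> 'o \<Rightarrow> 'o \<Rightarrow> 'o \<Rightarrow> 'm gmap set" where
  "ghom K X A B = {(f, p, x). f \<in> hom K A B \<and> dpos K B p \<and> x \<in> hom K X B}"

definition gid :: "('o, 'm) dac \<Rightarrow> 'o \<Rightarrow> 'o \<Rightarrow> 'm gmap" where
  "gid K X A = (Idm K A, Zer K A A, Zer K X A)"

definition gcomp :: "('o, 'm) dac \<Rightarrow> 'm gmap \<Rightarrow> 'm gmap \<Rightarrow> 'm gmap" where
  "gcomp K G F = (case G of (g, q, y) \<Rightarrow> case F of (f, p, x) \<Rightarrow>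
     (Cmp K g f, Add K q (Cmp K (Cmp K g p) (Dag K g)), Add K y (Cmp K g x)))"

definition gtens :: "('o, 'm) dac \<Rightarrow> 'm gmap \<Rightarrow> 'm gmap \<Rightarrow> 'm gmap" where
  "gtens K F G = (case F of (f, p, x) \<Rightarrow> case G of (g, q, y) \<Rightarrow>
     (dsum K f g, dsum K p q, col K x y))"

definition gcopy :: "('o, 'm) dac \<Rightarrow> 'o \<Rightarrow> 'o \<Rightarrow> 'm gmap" where
  "gcopy K X A = (col K (Idm K A) (Idm K A), Zer K (Bip K A A) (Bip K A A), Zer K X (Bip K A A))"

definition gdel :: "('o, 'm) dac \<Rightarrow> 'o \<Rightarrow> 'o \<Rightarrow> 'm gmap" where
  "gdel K X A = (Zer K A (Zob K), Zer K (Zob K) (Zob K), Zer K X (Zob K))"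

text \<open>Structural isomorphisms of the (non-strict) monoidal structure, induced by the
  biproduct: right unitor B \<otimes> 0 \<rightarrow> B and associator (A \<otimes> B) \<otimes> D \<rightarrow> A \<otimes> (B \<otimes> D).\<close>
definition gunitr :: "('o, 'm) dac \<Rightarrow> 'o \<Rightarrow> 'o \<Rightarrow> 'm gmap" where
  "gunitr K X B = (Pr1 K B (Zob K), Zer K B B, Zer K X B)"

definition gassoc :: "('o, 'm) dac \<Rightarrow> 'o \<Rightarrow> 'o \<Rightarrow> 'o \<Rightarrow> 'o \<Rightarrow> 'm gmap" where
  "gassoc K X A B D =
     (col K (Cmp K (Pr1 K A B) (Pr1 K (Bip K A B) D))
            (col K (Cmp K (Pr2 K A B) (Pr1 K (Bip K A B) D)) (Pr2 K (Bip K A B) D)),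
      Zer K (Bip K A (Bip K B D)) (Bip K A (Bip K B D)),
      Zer K X (Bip K A (Bip K B D)))"

text \<open>G : B \<otimes> A \<rightarrow> C is a conditional of F : A \<rightarrow> B \<otimes> C if
  (Id_B \<otimes> G) \<circ> (copy_B \<otimes> Id_A) \<circ> (Id_B \<otimes> del_C \<otimes> Id_A) \<circ> (F \<otimes> Id_A) \<circ> copy_A = F,
  with the coherence isomorphisms inserted explicitly.\<close>
definition is_gcond :: "('o, 'm) dac \<Rightarrow> 'o \<Rightarrow> 'o \<Rightarrow> 'o \<Rightarrow> 'o \<Rightarrow> 'm gmap \<Rightarrow> 'm gmap \<Rightarrow> bool" where
  "is_gcond K X A B C F G \<longleftrightarrow> G \<in> ghom K X (Bip K B A) C \<and>
     gcomp K (gtens K (gid K X B) G)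
      (gcomp K (gassoc K X B B A)
       (gcomp K (gtens K (gcopy K X B) (gid K X A))
        (gcomp K (gtens K (gunitr K X B) (gid K X A))
         (gcomp K (gtens K (gtens K (gid K X B) (gdel K X C)) (gid K X A))
          (gcomp K (gtens K F (gid K X A)) (gcopy K X A)))))) = F"

end

theory Submission
  imports Defs
begin

context dagger_additive_cat
begin

lemma hom_iff: "f \<in> hom K A B \<longleftrightarrow> Dom K f = A \<and> Cod K f = B"
  by (simp add: hom_def)

lemma idm_dc[simp]: "Dom K (Idm K A) = A" "Cod K (Idm K A) = A"
  using id_hom[of A] by (auto simp: hom_def)
lemma zer_dc[simp]: "Dom K (Zer K A B) = A" "Cod K (Zer K A B) = B"
  using zer_hom[of A B] by (auto simp: hom_def)
lemma in1_dc[simp]: "Dom K (In1 K A B) = A" "Cod K (In1 K A B) = Bip K A B"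
  using in1_hom[of A B] by (auto simp: hom_def)
lemma in2_dc[simp]: "Dom K (In2 K A B) = B" "Cod K (In2 K A B) = Bip K A B"
  using in2_hom[of A B] by (auto simp: hom_def)
lemma pr1_dc[simp]: "Dom K (Pr1 K A B) = Bip K A B" "Cod K (Pr1 K A B) = A"
  using pr1_hom[of A B] by (auto simp: hom_def)
lemma pr2_dc[simp]: "Dom K (Pr2 K A B) = Bip K A B" "Cod K (Pr2 K A B) = B"
  using pr2_hom[of A B] by (auto simp: hom_def)
lemma dag_dc[simp]: "Dom K (Dag K f) = Cod K f" "Cod K (Dag K f) = Dom K f"
  using dag_hom[of f "Dom K f" "Cod K f"] by (auto simp: hom_def)
lemma neg_dc[simp]: "Dom K (Neg K f) = Dom K f" "Cod K (Neg K f) = Cod K f"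
  using neg_hom[of f "Dom K f" "Cod K f"] by (auto simp: hom_def)
lemma cmp_dc[simp]: "Cod K f = Dom K g \<Longrightarrow> Dom K (Cmp K g f) = Dom K f"
  "Cod K f = Dom K g \<Longrightarrow> Cod K (Cmp K g f) = Cod K g"
  using comp_hom[of f "Dom K f" "Cod K f" g "Cod K g"] by (auto simp: hom_def)
lemma add_dc[simp]: "Dom K g = Dom K f \<Longrightarrow> Cod K g = Cod K f \<Longrightarrow> Dom K (Add K f g) = Dom K f"
  "Dom K g = Dom K f \<Longrightarrow> Cod K g = Cod K f \<Longrightarrow> Cod K (Add K f g) = Cod K f"
  using add_hom[of f "Dom K f" "Cod K f" g] by (auto simp: hom_def)

lemma idl[simp]: "Cod K f = B \<Longrightarrow> Cmp K (Idm K B) f = f"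
  using id_left[of f "Dom K f" B] by (simp add: hom_def)
lemma idr[simp]: "Dom K f = A \<Longrightarrow> Cmp K f (Idm K A) = f"
  using id_right[of f A "Cod K f"] by (simp add: hom_def)
lemma assocr[simp]: "Cod K f = Dom K g \<Longrightarrow> Cod K g = Dom K h \<Longrightarrow>
   Cmp K (Cmp K h g) f = Cmp K h (Cmp K g f)"
  using comp_assoc[of f "Dom K f" "Cod K f" g "Cod K g" h "Cod K h"] by (simp add: hom_def)
lemma assocl: "Cod K f = Dom K g \<Longrightarrow> Cod K g = Dom K h \<Longrightarrow>
   Cmp K h (Cmp K g f) = Cmp K (Cmp K h g) f"
  by simp
lemma dagdag[simp]: "Dag K (Dag K f) = f"
  using dag_dag[of f "Dom K f" "Cod K f"] by (simp add: hom_def)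
lemma dagcmp[simp]: "Cod K f = Dom K g \<Longrightarrow> Dag K (Cmp K g f) = Cmp K (Dag K f) (Dag K g)"
  using dag_comp[of f "Dom K f" "Cod K f" g "Cod K g"] by (simp add: hom_def)
lemma dagid[simp]: "Dag K (Idm K A) = Idm K A" by (rule dag_id)
lemma cmp_add_l[simp]: "Dom K g = Dom K f \<Longrightarrow> Cod K g = Cod K f \<Longrightarrow> Cod K f = Dom K h \<Longrightarrow>
   Cmp K h (Add K f g) = Add K (Cmp K h f) (Cmp K h g)"
  using comp_add_left[of f "Dom K f" "Cod K f" g h "Cod K h"] by (simp add: hom_def)
lemma cmp_add_r[simp]: "Dom K g = Dom K f \<Longrightarrow> Cod K g = Cod K f \<Longrightarrow> Cod K h = Dom K f \<Longrightarrow>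
   Cmp K (Add K f g) h = Add K (Cmp K f h) (Cmp K g h)"
  using comp_add_right[of f "Dom K f" "Cod K f" g h "Dom K h"] by (simp add: hom_def)
lemma dagadd[simp]: "Dom K g = Dom K f \<Longrightarrow> Cod K g = Cod K f \<Longrightarrow>
   Dag K (Add K f g) = Add K (Dag K f) (Dag K g)"
  using dag_add[of f "Dom K f" "Cod K f" g] by (simp add: hom_def)
lemma addA: "Dom K g = Dom K f \<Longrightarrow> Cod K g = Cod K f \<Longrightarrow> Dom K h = Dom K f \<Longrightarrow> Cod K h = Cod K f \<Longrightarrow>
   Add K (Add K f g) h = Add K f (Add K g h)"
  using add_assoc[of f "Dom K f" "Cod K f" g h] by (simp add: hom_def)
lemma addC: "Dom K g = Dom K f \<Longrightarrow> Cod K g = Cod K f \<Longrightarrow> Add K f g = Add K g f"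
  using add_comm[of f "Dom K f" "Cod K f" g] by (simp add: hom_def)
lemma add_zr[simp]: "Dom K f = A \<Longrightarrow> Cod K f = B \<Longrightarrow> Add K f (Zer K A B) = f"
  using add_zero[of f A B] by (simp add: hom_def)
lemma add_zl[simp]: "Dom K f = A \<Longrightarrow> Cod K f = B \<Longrightarrow> Add K (Zer K A B) f = f"
  using add_zr addC[of "Zer K A B" f] by simp
lemma add_nr[simp]: "Add K f (Neg K f) = Zer K (Dom K f) (Cod K f)"
  using add_neg[of f "Dom K f" "Cod K f"] by (simp add: hom_def)
lemma add_nl[simp]: "Add K (Neg K f) f = Zer K (Dom K f) (Cod K f)"
  using add_nr addC[of "Neg K f" f] by simp
lemmas [simp] = pr1_in1 pr2_in2 pr1_in2 pr2_in1 dag_pr1 dag_pr2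

lemma dag_in1[simp]: "Dag K (In1 K A B) = Pr1 K A B" using dag_pr1 dagdag by metis
lemma dag_in2[simp]: "Dag K (In2 K A B) = Pr2 K A B" using dag_pr2 dagdag by metis

lemma pr_in_r[simp]:
  "Cod K f = A \<Longrightarrow> Cmp K (Pr1 K A B) (Cmp K (In1 K A B) f) = f"
  "Cod K g = B \<Longrightarrow> Cmp K (Pr2 K A B) (Cmp K (In2 K A B) g) = g"
  by (simp_all add: assocl)

lemma idem_zero: assumes "Dom K x = A" "Cod K x = B" "Add K x x = x" shows "x = Zer K A B"
proof -
  have "x = Add K x (Add K x (Neg K x))" using assms(1,2) by simp
  also have "\<dots> = Add K (Add K x x) (Neg K x)" by (rule addA[symmetric]) simp_all
  also have "\<dots> = Add K x (Neg K x)" using assms(3) by simp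
  also have "\<dots> = Zer K A B" using assms(1,2) by simp
  finally show ?thesis .
qed

lemma cmp_zr[simp]: assumes a: "Dom K f = B" shows "Cmp K f (Zer K A B) = Zer K A (Cod K f)"
proof (rule idem_zero)
  have "Add K (Cmp K f (Zer K A B)) (Cmp K f (Zer K A B)) = Cmp K f (Add K (Zer K A B) (Zer K A B))"
    by (rule cmp_add_l[symmetric]) (simp_all add: a)
  also have "\<dots> = Cmp K f (Zer K A B)" by simp
  finally show "Add K (Cmp K f (Zer K A B)) (Cmp K f (Zer K A B)) = Cmp K f (Zer K A B)" .
qed (simp_all add: a)
lemma cmp_zl[simp]: assumes a: "Cod K f = A" shows "Cmp K (Zer K A B) f = Zer K (Dom K f) B"
proof (rule idem_zero)
  have "Add K (Cmp K (Zer K A B) f) (Cmp K (Zer K A B) f) = Cmp K (Add K (Zer K A B) (Zer K A B)) f"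
    by (rule cmp_add_r[symmetric]) (simp_all add: a)
  also have "\<dots> = Cmp K (Zer K A B) f" by simp
  finally show "Add K (Cmp K (Zer K A B) f) (Cmp K (Zer K A B) f) = Cmp K (Zer K A B) f" .
qed (simp_all add: a)
lemma dag_zer[simp]: "Dag K (Zer K A B) = Zer K B A"
proof (rule idem_zero)
  have "Add K (Dag K (Zer K A B)) (Dag K (Zer K A B)) = Dag K (Add K (Zer K A B) (Zer K A B))"
    by (rule dagadd[symmetric]) simp_all
  also have "\<dots> = Dag K (Zer K A B)" by simp
  finally show "Add K (Dag K (Zer K A B)) (Dag K (Zer K A B)) = Dag K (Zer K A B)" .
qed simp_all

lemma add_cancel_l: assumes "Dom K a = Dom K b" "Cod K a = Cod K b" "Dom K c = Dom K b" "Cod K c = Cod K b"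
  and e: "Add K a b = Add K a c" shows "b = c"
proof -
  have "b = Add K (Add K (Neg K a) a) b" using assms(1-4) by simp
  also have "\<dots> = Add K (Neg K a) (Add K a b)" by (rule addA) (simp_all add: assms(1-4))
  also have "\<dots> = Add K (Neg K a) (Add K a c)" by (simp only: e)
  also have "\<dots> = Add K (Add K (Neg K a) a) c" by (rule addA[symmetric]) (simp_all add: assms(1-4))
  also have "\<dots> = c" using assms(1-4) by simp
  finally show ?thesis .
qed

lemma cmp_neg_l[simp]: assumes a: "Cod K f = Dom K h" shows "Cmp K h (Neg K f) = Neg K (Cmp K h f)"
proof (rule add_cancel_l[of "Cmp K h f"])
  have "Add K (Cmp K h f) (Cmp K h (Neg K f)) = Cmp K h (Add K f (Neg K f))"
    by (rule cmp_add_l[symmetric]) (simp_all add: a)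
  also have "\<dots> = Add K (Cmp K h f) (Neg K (Cmp K h f))" using a by simp
  finally show "Add K (Cmp K h f) (Cmp K h (Neg K f)) = Add K (Cmp K h f) (Neg K (Cmp K h f))" .
qed (simp_all add: a)
lemma cmp_neg_r[simp]: assumes a: "Cod K h = Dom K f" shows "Cmp K (Neg K f) h = Neg K (Cmp K f h)"
proof (rule add_cancel_l[of "Cmp K f h"])
  have "Add K (Cmp K f h) (Cmp K (Neg K f) h) = Cmp K (Add K f (Neg K f)) h"
    by (rule cmp_add_r[symmetric]) (simp_all add: a)
  also have "\<dots> = Add K (Cmp K f h) (Neg K (Cmp K f h))" using a by simp
  finally show "Add K (Cmp K f h) (Cmp K (Neg K f) h) = Add K (Cmp K f h) (Neg K (Cmp K f h))" .
qed (simp_all add: a)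
lemma dag_neg[simp]: "Dag K (Neg K f) = Neg K (Dag K f)"
proof (rule add_cancel_l[of "Dag K f"])
  have "Add K (Dag K f) (Dag K (Neg K f)) = Dag K (Add K f (Neg K f))"
    by (rule dagadd[symmetric]) simp_all
  also have "\<dots> = Add K (Dag K f) (Neg K (Dag K f))" by simp
  finally show "Add K (Dag K f) (Dag K (Neg K f)) = Add K (Dag K f) (Neg K (Dag K f))" .
qed simp_all
lemma neg_neg[simp]: "Neg K (Neg K f) = f"
proof (rule add_cancel_l[of "Neg K f"])
  show "Add K (Neg K f) (Neg K (Neg K f)) = Add K (Neg K f) f" by simp
qed simp_all

lemma pr_in_r2[simp]:
  "Cod K g = B \<Longrightarrow> Cmp K (Pr1 K A B) (Cmp K (In2 K A B) g) = Zer K (Dom K g) A"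
  "Cod K f = A \<Longrightarrow> Cmp K (Pr2 K A B) (Cmp K (In1 K A B) f) = Zer K (Dom K f) B"
  by (simp_all add: assocl del: assocr)

lemma col_dc[simp]: "Dom K g = Dom K f \<Longrightarrow> Dom K (col K f g) = Dom K f"
  "Dom K g = Dom K f \<Longrightarrow> Cod K (col K f g) = Bip K (Cod K f) (Cod K g)"
  by (simp_all add: col_def)
lemma row_dc[simp]: "Cod K k = Cod K h \<Longrightarrow> Dom K (row K h k) = Bip K (Dom K h) (Dom K k)"
  "Cod K k = Cod K h \<Longrightarrow> Cod K (row K h k) = Cod K h"
  by (simp_all add: row_def)

lemma pr_col[simp]:
  "Cod K f = B1 \<Longrightarrow> Cod K g = B2 \<Longrightarrow> Dom K g = Dom K f \<Longrightarrow> Cmp K (Pr1 K B1 B2) (col K f g) = f"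
  "Cod K f = B1 \<Longrightarrow> Cod K g = B2 \<Longrightarrow> Dom K g = Dom K f \<Longrightarrow> Cmp K (Pr2 K B1 B2) (col K f g) = g"
  by (simp_all add: col_def)

lemma col_cmp[simp]: "Dom K g = Dom K f \<Longrightarrow> Cod K x = Dom K f \<Longrightarrow>
  Cmp K (col K f g) x = col K (Cmp K f x) (Cmp K g x)"
  by (simp add: col_def)

lemma row_in[simp]:
  "Dom K h = A1 \<Longrightarrow> Dom K k = A2 \<Longrightarrow> Cod K k = Cod K h \<Longrightarrow> Cmp K (row K h k) (In1 K A1 A2) = h"
  "Dom K h = A1 \<Longrightarrow> Dom K k = A2 \<Longrightarrow> Cod K k = Cod K h \<Longrightarrow> Cmp K (row K h k) (In2 K A1 A2) = k"
  by (simp_all add: row_def)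

lemma cmp_row[simp]: "Cod K h = Dom K x \<Longrightarrow> Cod K k = Dom K x \<Longrightarrow>
  Cmp K x (row K h k) = row K (Cmp K x h) (Cmp K x k)"
  by (simp add: row_def)

lemma row_col[simp]: "Cod K f = Dom K h \<Longrightarrow> Cod K g = Dom K k \<Longrightarrow> Dom K g = Dom K f \<Longrightarrow> Cod K k = Cod K h \<Longrightarrow>
  Cmp K (row K h k) (col K f g) = Add K (Cmp K h f) (Cmp K k g)"
  unfolding col_def by (simp add: assocl del: assocr)

lemma dag_col[simp]: "Dom K g = Dom K f \<Longrightarrow> Dag K (col K f g) = row K (Dag K f) (Dag K g)"
  by (simp add: col_def row_def)
lemma dag_row[simp]: "Cod K k = Cod K h \<Longrightarrow> Dag K (row K h k) = col K (Dag K h) (Dag K k)"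
  by (simp add: col_def row_def)

lemma col_ext: assumes "Cod K u = Bip K B1 B2"
  shows "col K (Cmp K (Pr1 K B1 B2) u) (Cmp K (Pr2 K B1 B2) u) = u"
proof -
  have "u = Cmp K (Idm K (Bip K B1 B2)) u" using assms by simp
  also have "\<dots> = Cmp K (Add K (Cmp K (In1 K B1 B2) (Pr1 K B1 B2)) (Cmp K (In2 K B1 B2) (Pr2 K B1 B2))) u"
    by (simp only: bip_sum)
  also have "\<dots> = col K (Cmp K (Pr1 K B1 B2) u) (Cmp K (Pr2 K B1 B2) u)"
    using assms by (simp add: col_def)
  finally show ?thesis by simp
qed
lemma row_ext: assumes "Dom K u = Bip K A1 A2"
  shows "row K (Cmp K u (In1 K A1 A2)) (Cmp K u (In2 K A1 A2)) = u"
proof -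
  have "u = Cmp K u (Idm K (Bip K A1 A2))" using assms by simp
  also have "\<dots> = Cmp K u (Add K (Cmp K (In1 K A1 A2) (Pr1 K A1 A2)) (Cmp K (In2 K A1 A2) (Pr2 K A1 A2)))"
    by (simp only: bip_sum)
  also have "\<dots> = row K (Cmp K u (In1 K A1 A2)) (Cmp K u (In2 K A1 A2))"
    using assms by (simp add: row_def assocl del: assocr)
  finally show ?thesis by simp
qed

lemma eq_pr: assumes "Cod K u = Bip K B1 B2" "Cod K v = Bip K B1 B2"
  "Cmp K (Pr1 K B1 B2) u = Cmp K (Pr1 K B1 B2) v" "Cmp K (Pr2 K B1 B2) u = Cmp K (Pr2 K B1 B2) v"
  shows "u = v"
  using col_ext[OF assms(1)] col_ext[OF assms(2)] assms(3,4) by metis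
lemma eq_in: assumes "Dom K u = Bip K A1 A2" "Dom K v = Bip K A1 A2"
  "Cmp K u (In1 K A1 A2) = Cmp K v (In1 K A1 A2)" "Cmp K u (In2 K A1 A2) = Cmp K v (In2 K A1 A2)"
  shows "u = v"
  using row_ext[OF assms(1)] row_ext[OF assms(2)] assms(3,4) by metis

lemma col_eq_iff[simp]: "Dom K b = Dom K a \<Longrightarrow> Dom K d = Dom K c \<Longrightarrow> Cod K c = Cod K a \<Longrightarrow> Cod K d = Cod K b \<Longrightarrow>
  (col K a b = col K c d) = (a = c \<and> b = d)"
  by (metis pr_col)
lemma row_eq_iff[simp]: "Cod K b = Cod K a \<Longrightarrow> Cod K d = Cod K c \<Longrightarrow> Dom K c = Dom K a \<Longrightarrow> Dom K d = Dom K b \<Longrightarrow>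
  (row K a b = row K c d) = (a = c \<and> b = d)"
  by (metis row_in)

lemma add_col[simp]: "Dom K b = Dom K a \<Longrightarrow> Dom K c = Dom K a \<Longrightarrow> Dom K d = Dom K a \<Longrightarrow>
  Cod K c = Cod K a \<Longrightarrow> Cod K d = Cod K b \<Longrightarrow>
  Add K (col K a b) (col K c d) = col K (Add K a c) (Add K b d)"
  by (rule eq_pr[of _ "Cod K a" "Cod K b"]) simp_all
lemma add_row[simp]: "Cod K b = Cod K a \<Longrightarrow> Cod K c = Cod K a \<Longrightarrow> Cod K d = Cod K a \<Longrightarrow>
  Dom K c = Dom K a \<Longrightarrow> Dom K d = Dom K b \<Longrightarrow>
  Add K (row K a b) (row K c d) = row K (Add K a c) (Add K b d)"
  by (rule eq_in[of _ "Dom K a" "Dom K b"]) simp_all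
lemma row_cols[simp]: "Dom K b = Dom K a \<Longrightarrow> Dom K d = Dom K c \<Longrightarrow> Cod K c = Cod K a \<Longrightarrow> Cod K d = Cod K b \<Longrightarrow>
  row K (col K a b) (col K c d) = col K (row K a c) (row K b d)"
  by (rule eq_pr[of _ "Cod K a" "Cod K b"]) simp_all
lemma col_zer[simp]: "col K (Zer K A B1) (Zer K A B2) = Zer K A (Bip K B1 B2)"
  by (rule eq_pr[of _ B1 B2]) simp_all
lemma row_zer[simp]: "row K (Zer K A1 B) (Zer K A2 B) = Zer K (Bip K A1 A2) B"
  by (rule eq_in[of _ A1 A2]) simp_all

lemma row_in_r[simp]:
  "Dom K h = A1 \<Longrightarrow> Dom K k = A2 \<Longrightarrow> Cod K k = Cod K h \<Longrightarrow> Cod K x = A1 \<Longrightarrow>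
     Cmp K (row K h k) (Cmp K (In1 K A1 A2) x) = Cmp K h x"
  "Dom K h = A1 \<Longrightarrow> Dom K k = A2 \<Longrightarrow> Cod K k = Cod K h \<Longrightarrow> Cod K x = A2 \<Longrightarrow>
     Cmp K (row K h k) (Cmp K (In2 K A1 A2) x) = Cmp K k x"
  by (simp_all add: assocl del: assocr)

lemma neg_zer[simp]: "Neg K (Zer K A B) = Zer K A B"
proof -
  have "Add K (Zer K A B) (Neg K (Zer K A B)) = Neg K (Zer K A B)" by (rule add_zl) simp_all
  moreover have "Add K (Zer K A B) (Neg K (Zer K A B)) = Zer K A B" by (simp only: add_nr zer_dc)
  ultimately show ?thesis by simp
qed

lemma add_solve_l: assumes "Add K b a = c" "Dom K a = Dom K b" "Cod K a = Cod K b"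
  shows "b = Add K c (Neg K a)"
proof -
  have "Add K c (Neg K a) = Add K (Add K b a) (Neg K a)" using assms(1) by simp
  also have "\<dots> = Add K b (Add K a (Neg K a))" by (rule addA) (simp_all add: assms(2,3))
  also have "\<dots> = b" using assms(2,3) by simp
  finally show ?thesis by simp
qed
lemma add_solve_r: assumes "Add K a b = c" "Dom K a = Dom K b" "Cod K a = Cod K b"
  shows "b = Add K c (Neg K a)"
  using add_solve_l[of b a c] assms addC[of a b] by simp

lemma add_cancel1: assumes "Dom K a = Dom K b" "Cod K a = Cod K b"
  shows "Add K a (Add K b (Neg K a)) = b"
proof -
  have "Add K a (Add K b (Neg K a)) = Add K a (Add K (Neg K a) b)" using assms addC[of b "Neg K a"] by simp
  also have "\<dots> = Add K (Add K a (Neg K a)) b" by (rule addA[symmetric]) (simp_all add: assms)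
  also have "\<dots> = b" using assms by simp
  finally show ?thesis .
qed
lemma add_cancel2: assumes "Dom K a = Dom K b" "Cod K a = Cod K b"
  shows "Add K (Add K b (Neg K a)) a = b"
proof -
  have "Add K (Add K b (Neg K a)) a = Add K b (Add K (Neg K a) a)" by (rule addA) (simp_all add: assms)
  also have "\<dots> = b" using assms by simp
  finally show ?thesis .
qed

lemma schur_pos:
  assumes "Dom K p1 = B" "Cod K p1 = D" "Dom K p2 = C" "Cod K p2 = D" "Dom K n = C" "Cod K n = B"
    "Dom K r = C" "Cod K r = C"
    "Cmp K (Dag K p2) (Cmp K p1 n) = r" "Cmp K (Dag K n) (Cmp K (Dag K p1) p2) = r"
    "Cmp K (Dag K n) (Cmp K (Dag K p1) (Cmp K p1 n)) = r"
  shows "Cmp K (Dag K (Add K p2 (Neg K (Cmp K p1 n)))) (Add K p2 (Neg K (Cmp K p1 n)))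
     = Add K (Cmp K (Dag K p2) p2) (Neg K r)"
proof -
  let ?psi = "Add K p2 (Neg K (Cmp K p1 n))"
  have d: "Dag K ?psi = Add K (Dag K p2) (Neg K (Cmp K (Dag K n) (Dag K p1)))" using assms(1-6) by simp
  have e1: "Cmp K (Dag K p2) ?psi = Add K (Cmp K (Dag K p2) p2) (Neg K r)" using assms by simp
  have e2: "Cmp K (Cmp K (Dag K n) (Dag K p1)) ?psi = Zer K C C" using assms by simp
  let ?w = "Cmp K (Dag K n) (Dag K p1)"
  have "Cmp K (Dag K ?psi) ?psi = Cmp K (Add K (Dag K p2) (Neg K ?w)) ?psi" by (simp only: d)
  also have "\<dots> = Add K (Cmp K (Dag K p2) ?psi) (Cmp K (Neg K ?w) ?psi)"
    by (rule cmp_add_r) (simp_all add: assms(1-6))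
  also have "Cmp K (Neg K ?w) ?psi = Neg K (Cmp K ?w ?psi)"
    by (rule cmp_neg_r) (simp add: assms(1-6))
  also have "Add K (Cmp K (Dag K p2) ?psi) (Neg K (Cmp K ?w ?psi)) = Add K (Cmp K (Dag K p2) p2) (Neg K r)"
    unfolding e1 e2 using assms(1-8) by simp
  finally show ?thesis .
qed

end

context dagger_additive_cat
begin
lemma comp_formula:
  assumes "Dom K f = A" "Cod K f = B" "Dom K g = A" "Cod K g = C"
    "Dom K a = B" "Cod K a = B" "Dom K b = C" "Cod K b = B" "Dom K c = B" "Cod K c = C" "Dom K d = C" "Cod K d = C"
    "Dom K s = X" "Cod K s = B" "Dom K t = X" "Cod K t = C"
    "Dom K h1 = B" "Cod K h1 = C" "Dom K h2 = A" "Cod K h2 = C" "Dom K q = C" "Cod K q = C" "Dom K y = X" "Cod K y = C"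
  shows "gcomp K (gtens K (gid K X B) (row K h1 h2, q, y))
      (gcomp K (gassoc K X B B A)
       (gcomp K (gtens K (gcopy K X B) (gid K X A))
        (gcomp K (gtens K (gunitr K X B) (gid K X A))
         (gcomp K (gtens K (gtens K (gid K X B) (gdel K X C)) (gid K X A))
          (gcomp K (gtens K (col K f g, mat2 K a b c d, col K s t) (gid K X A)) (gcopy K X A))))))
    = (col K f (Add K (Cmp K h1 f) h2), mat2 K a (Cmp K a (Dag K h1)) (Cmp K h1 a) (Add K q (Cmp K h1 (Cmp K a (Dag K h1)))),
       col K s (Add K y (Cmp K h1 s)))"
  using assms
  by (simp add: gcomp_def gtens_def gid_def gcopy_def gdel_def gunitr_def gassoc_def dsum_def mat2_def)
end

theorem mainTheorem15:
  fixes K :: "('o, 'm) dac" and B C :: 'o and \<alpha> \<beta> \<delta> :: 'm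
  assumes "mp_dagger_additive_cat K"
    and "\<alpha> \<in> hom K B B" and "\<beta> \<in> hom K C B" and "\<delta> \<in> hom K C C"
    and "dpos K (Bip K B C) (mat2 K \<alpha> \<beta> (Dag K \<beta>) \<delta>)"
    and "is_iso K B B \<alpha>"
  shows "(cond_gen K \<alpha> \<beta> \<delta> (Cmp K (Dag K \<beta>) (inv_map K \<alpha>))
          \<and> (\<forall>m. cond_gen K \<alpha> \<beta> \<delta> m \<longrightarrow> m = Cmp K (Dag K \<beta>) (inv_map K \<alpha>)))
       \<and> (\<forall>X A f g s t. f \<in> hom K A B \<and> g \<in> hom K A C \<and> s \<in> hom K X B \<and> t \<in> hom K X C \<longrightarrow>
           (let F = (col K f g, mat2 K \<alpha> \<beta> (Dag K \<beta>) \<delta>, col K s t);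
                m = Cmp K (Dag K \<beta>) (mpinv K \<alpha>);
                H = (row K m (Sub K g (Cmp K m f)), Sub K \<delta> (Cmp K m \<beta>), Sub K t (Cmp K m s))
            in is_gcond K X A B C F H \<and> (\<forall>G. is_gcond K X A B C F G \<longrightarrow> G = H)))"
proof -
  interpret mp_dagger_additive_cat K by (rule assms(1))
  have ta: "Dom K \<alpha> = B" "Cod K \<alpha> = B" using assms(2) by (auto simp: hom_def)
  have tb: "Dom K \<beta> = C" "Cod K \<beta> = B" using assms(3) by (auto simp: hom_def)
  have td: "Dom K \<delta> = C" "Cod K \<delta> = C" using assms(4) by (auto simp: hom_def)
  obtain ai where tai: "Dom K ai = B" "Cod K ai = B" and ai1: "Cmp K ai \<alpha> = Idm K B" and ai2: "Cmp K \<alpha> ai = Idm K B"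
    using assms(6) by (auto simp: is_iso_def hom_def)
  have inv_eq: "inv_map K \<alpha> = ai"
  proof -
    let ?P = "\<lambda>b. b \<in> hom K (Cod K \<alpha>) (Dom K \<alpha>) \<and> Cmp K b \<alpha> = Idm K (Dom K \<alpha>) \<and> Cmp K \<alpha> b = Idm K (Cod K \<alpha>)"
    have "?P ai" using tai ai1 ai2 ta by (simp add: hom_def)
    hence P: "?P (inv_map K \<alpha>)" unfolding inv_map_def by (rule someI)
    hence tb': "Dom K (inv_map K \<alpha>) = B" "Cod K (inv_map K \<alpha>) = B" using ta by (auto simp: hom_def)
    have "inv_map K \<alpha> = Cmp K (inv_map K \<alpha>) (Cmp K \<alpha> ai)" using ai2 tb' by simp
    also have "\<dots> = Cmp K (Cmp K (inv_map K \<alpha>) \<alpha>) ai" using tb' ta tai by simp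
    also have "\<dots> = ai" using P ta tai by simp
    finally show ?thesis .
  qed
  have mp_eq: "mpinv K \<alpha> = ai"
  proof -
    have "is_mp_inverse K \<alpha> ai" using tai ai1 ai2 ta by (simp add: is_mp_inverse_def hom_def)
    hence P: "is_mp_inverse K \<alpha> (mpinv K \<alpha>)" unfolding mpinv_def by (rule someI)
    let ?g = "mpinv K \<alpha>"
    have tg: "Dom K ?g = B" "Cod K ?g = B" using P ta by (auto simp: is_mp_inverse_def hom_def)
    have e: "Cmp K (Cmp K \<alpha> ?g) \<alpha> = \<alpha>" using P by (simp add: is_mp_inverse_def)
    have "?g = Cmp K (Cmp K ai \<alpha>) (Cmp K ?g (Cmp K \<alpha> ai))" using ai1 ai2 tg by simp
    also have "\<dots> = Cmp K ai (Cmp K (Cmp K (Cmp K \<alpha> ?g) \<alpha>) ai)" using ta tai tg by simp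
    also have "\<dots> = ai" unfolding e using ai2 tai by simp
    finally show ?thesis .
  qed
  obtain \<phi> where tphi: "Dom K \<phi> = Bip K B C" and Sig: "mat2 K \<alpha> \<beta> (Dag K \<beta>) \<delta> = Cmp K (Dag K \<phi>) \<phi>"
    using assms(5) by (auto simp: dpos_def)
  define p1 where "p1 = Cmp K \<phi> (In1 K B C)"
  define p2 where "p2 = Cmp K \<phi> (In2 K B C)"
  have tp: "Dom K p1 = B" "Cod K p1 = Cod K \<phi>" "Dom K p2 = C" "Cod K p2 = Cod K \<phi>"
    unfolding p1_def p2_def using tphi by simp_all
  have comp: "\<And>x y. Dom K x = Bip K B C \<Longrightarrow> Dom K y = Bip K B C \<Longrightarrow> Cod K x = Cod K y \<Longrightarrow>
      Cmp K (Dag K (Cmp K x (In1 K B C))) (Cmp K y (In2 K B C)) = Cmp K (Pr1 K B C) (Cmp K (Cmp K (Dag K x) y) (In2 K B C))"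
    by simp
  have blk: "Cmp K (Pr1 K B C) (Cmp K (Cmp K (Dag K \<phi>) \<phi>) (In1 K B C)) = \<alpha>"
     "Cmp K (Pr1 K B C) (Cmp K (Cmp K (Dag K \<phi>) \<phi>) (In2 K B C)) = \<beta>"
     "Cmp K (Pr2 K B C) (Cmp K (Cmp K (Dag K \<phi>) \<phi>) (In2 K B C)) = \<delta>"
    unfolding Sig[symmetric] mat2_def using ta tb td by simp_all
  have a_eq: "Cmp K (Dag K p1) p1 = \<alpha>" using blk(1) tphi unfolding p1_def by simp
  have b_eq: "Cmp K (Dag K p1) p2 = \<beta>" using blk(2) tphi unfolding p1_def p2_def by simp
  have d_eq: "Cmp K (Dag K p2) p2 = \<delta>" using blk(3) tphi unfolding p2_def by simp
  have tphi2: "Cod K (Cmp K (Dag K \<phi>) \<phi>) = Bip K B C" using tphi by simp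
  have ada: "Dag K \<alpha> = \<alpha>"
  proof -
    have "Dag K (Cmp K (Dag K p1) p1) = Cmp K (Dag K p1) p1" by simp
    thus ?thesis unfolding a_eq .
  qed
  have bd_eq: "Cmp K (Dag K p2) p1 = Dag K \<beta>"
  proof -
    have "Dag K (Cmp K (Dag K p1) p2) = Cmp K (Dag K p2) p1" using tp by simp
    thus ?thesis unfolding b_eq by simp
  qed
  have ai2r: "\<And>x. Cod K x = B \<Longrightarrow> Cmp K \<alpha> (Cmp K ai x) = x"
    using ta tai ai2 by (simp add: assocl del: assocr)
  have ai1r: "\<And>x. Cod K x = B \<Longrightarrow> Cmp K ai (Cmp K \<alpha> x) = x"
    using ta tai ai1 by (simp add: assocl del: assocr)
  have dai: "Dag K ai = ai"
  proof -
    have "Cmp K (Dag K ai) \<alpha> = Dag K (Cmp K \<alpha> ai)" using ta tai ada by simp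
    hence e: "Cmp K (Dag K ai) \<alpha> = Idm K B" using ai2 by simp
    have "Dag K ai = Cmp K (Dag K ai) (Cmp K \<alpha> ai)" using ai2 tai by simp
    also have "\<dots> = Cmp K (Cmp K (Dag K ai) \<alpha>) ai" using ta tai by simp
    also have "\<dots> = ai" unfolding e using tai by simp
    finally show ?thesis .
  qed
  define m where "m = Cmp K (Dag K \<beta>) ai"
  have tm: "Dom K m = B" "Cod K m = C" unfolding m_def using tb tai by simp_all
  have m_a: "Cmp K m \<alpha> = Dag K \<beta>" unfolding m_def using tb tai ta ai1r[of \<alpha>] ai1 by simp
  have dm: "Dag K m = Cmp K ai \<beta>" unfolding m_def using tb tai dai by simp
  have a_dm: "Cmp K \<alpha> (Dag K m) = \<beta>" unfolding dm using ai2r tb by simp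
  define r where "r = Cmp K m \<beta>"
  have tr: "Dom K r = C" "Cod K r = C" unfolding r_def using tm tb by simp_all
  have mam: "Cmp K m (Cmp K \<alpha> (Dag K m)) = r" unfolding a_dm r_def ..
  have dposr: "dpos K C (Sub K \<delta> r)"
  proof -
    define n where "n = Cmp K ai \<beta>"
    have tn: "Dom K n = C" "Cod K n = B" unfolding n_def using tai tb by simp_all
    have dn: "Dag K n = m" unfolding n_def m_def using tai tb dai by simp
    have r1: "Cmp K (Dag K p2) (Cmp K p1 n) = r"
    proof -
      have "Cmp K (Dag K p2) (Cmp K p1 n) = Cmp K (Cmp K (Dag K p2) p1) n" using tp tn by simp
      also have "\<dots> = r" unfolding bd_eq r_def m_def n_def using tb tai by simp
      finally show ?thesis .
    qed
    have r2: "Cmp K (Dag K n) (Cmp K (Dag K p1) p2) = r" unfolding dn b_eq r_def ..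
    have r3: "Cmp K (Dag K n) (Cmp K (Dag K p1) (Cmp K p1 n)) = r"
    proof -
      have "Cmp K (Dag K p1) (Cmp K p1 n) = Cmp K (Cmp K (Dag K p1) p1) n" using tp tn by simp
      also have "\<dots> = \<beta>" unfolding a_eq n_def using ai2r tb by simp
      finally show ?thesis unfolding dn r_def by simp
    qed
    have "Cmp K (Dag K (Add K p2 (Neg K (Cmp K p1 n)))) (Add K p2 (Neg K (Cmp K p1 n)))
       = Add K (Cmp K (Dag K p2) p2) (Neg K r)"
      by (rule schur_pos[OF tp(1,2,3,4) tn tr r1 r2 r3])
    hence "Sub K \<delta> r = Cmp K (Dag K (Add K p2 (Neg K (Cmp K p1 n)))) (Add K p2 (Neg K (Cmp K p1 n)))"
      unfolding d_eq Sub_def by simp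
    moreover have "Dom K (Add K p2 (Neg K (Cmp K p1 n))) = C" using tp tn by simp
    moreover have "Sub K \<delta> r \<in> hom K C C" using td tr by (simp add: Sub_def hom_def)
    ultimately show ?thesis unfolding dpos_def by blast
  qed
  have cg: "cond_gen K \<alpha> \<beta> \<delta> m" unfolding cond_gen_def using tm ta tb m_a dposr
    by (simp add: hom_def r_def)
  have cg_unique: "\<forall>m'. cond_gen K \<alpha> \<beta> \<delta> m' \<longrightarrow> m' = m"
  proof (intro allI impI)
    fix m' assume "cond_gen K \<alpha> \<beta> \<delta> m'"
    hence t': "Dom K m' = B" "Cod K m' = C" and e: "Cmp K m' \<alpha> = Dag K \<beta>" using ta tb
      by (auto simp: cond_gen_def hom_def)
    have "m' = Cmp K m' (Cmp K \<alpha> ai)" using ai2 t' by simp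
    also have "\<dots> = Cmp K (Cmp K m' \<alpha>) ai" using t' ta tai by simp
    also have "\<dots> = m" unfolding e m_def ..
    finally show "m' = m" .
  qed
  have mm: "Cmp K (Dag K \<beta>) (mpinv K \<alpha>) = m" unfolding mp_eq m_def ..
  have part2: "\<forall>X A f g s t. f \<in> hom K A B \<and> g \<in> hom K A C \<and> s \<in> hom K X B \<and> t \<in> hom K X C \<longrightarrow>
           (let F = (col K f g, mat2 K \<alpha> \<beta> (Dag K \<beta>) \<delta>, col K s t);
                m = Cmp K (Dag K \<beta>) (mpinv K \<alpha>);
                H = (row K m (Sub K g (Cmp K m f)), Sub K \<delta> (Cmp K m \<beta>), Sub K t (Cmp K m s))
            in is_gcond K X A B C F H \<and> (\<forall>G. is_gcond K X A B C F G \<longrightarrow> G = H))"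
  proof (intro allI impI)
    fix X A f g s t assume hyp: "f \<in> hom K A B \<and> g \<in> hom K A C \<and> s \<in> hom K X B \<and> t \<in> hom K X C"
    hence tf: "Dom K f = A" "Cod K f = B" "Dom K g = A" "Cod K g = C" "Dom K s = X" "Cod K s = B"
      "Dom K t = X" "Cod K t = C" by (auto simp: hom_def)
    let ?F = "(col K f g, mat2 K \<alpha> \<beta> (Dag K \<beta>) \<delta>, col K s t)"
    let ?H = "(row K m (Sub K g (Cmp K m f)), Sub K \<delta> (Cmp K m \<beta>), Sub K t (Cmp K m s))"
    have tdb: "Dom K (Dag K \<beta>) = B" "Cod K (Dag K \<beta>) = C" using tb by simp_all
    note cf = comp_formula[OF tf(1-4) ta tb tdb td tf(5-8)]
    have ex: "is_gcond K X A B C ?F ?H"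
    proof -
      have Hhom: "?H \<in> ghom K X (Bip K B A) C" using dposr tm tf tb
        by (simp add: ghom_def hom_def Sub_def r_def)
      have t2: "Dom K (Sub K g (Cmp K m f)) = A" "Cod K (Sub K g (Cmp K m f)) = C"
        "Dom K (Sub K \<delta> (Cmp K m \<beta>)) = C" "Cod K (Sub K \<delta> (Cmp K m \<beta>)) = C"
        "Dom K (Sub K t (Cmp K m s)) = X" "Cod K (Sub K t (Cmp K m s)) = C"
        using tm tf tb td by (simp_all add: Sub_def)
      have e1: "Add K (Cmp K m f) (Sub K g (Cmp K m f)) = g"
        unfolding Sub_def by (rule add_cancel1) (simp_all add: tm tf)
      have e2: "Add K (Sub K \<delta> (Cmp K m \<beta>)) (Cmp K m (Cmp K \<alpha> (Dag K m))) = \<delta>"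
        unfolding Sub_def mam r_def by (rule add_cancel2) (simp_all add: tm tb td)
      have e3: "Add K (Sub K t (Cmp K m s)) (Cmp K m s) = t"
        unfolding Sub_def by (rule add_cancel2) (simp_all add: tm tf)
      show ?thesis unfolding is_gcond_def
        using Hhom cf[OF tm t2] e1 e2 e3 a_dm m_a by simp
    qed
    have un: "\<forall>G. is_gcond K X A B C ?F G \<longrightarrow> G = ?H"
    proof (intro allI impI)
      fix G assume gc: "is_gcond K X A B C ?F G"
      obtain h q y where G: "G = (h, q, y)" by (cases G) auto
      have th: "Dom K h = Bip K B A" "Cod K h = C" "Dom K q = C" "Cod K q = C" "Dom K y = X" "Cod K y = C"
        using gc unfolding is_gcond_def G by (auto simp: ghom_def hom_def dpos_def)
      define h1 where "h1 = Cmp K h (In1 K B A)"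
      define h2 where "h2 = Cmp K h (In2 K B A)"
      have th1: "Dom K h1 = B" "Cod K h1 = C" "Dom K h2 = A" "Cod K h2 = C"
        unfolding h1_def h2_def using th by simp_all
      have hr: "h = row K h1 h2" unfolding h1_def h2_def using row_ext[OF th(1)] by simp
      have "(col K f (Add K (Cmp K h1 f) h2),
          mat2 K \<alpha> (Cmp K \<alpha> (Dag K h1)) (Cmp K h1 \<alpha>) (Add K q (Cmp K h1 (Cmp K \<alpha> (Dag K h1)))),
          col K s (Add K y (Cmp K h1 s))) = ?F"
        using gc unfolding is_gcond_def G hr cf[OF th1 th(3-6)] by simp
      hence eqs: "Add K (Cmp K h1 f) h2 = g" "Cmp K h1 \<alpha> = Dag K \<beta>"
        "Add K q (Cmp K h1 \<beta>) = \<delta>" "Add K y (Cmp K h1 s) = t"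
        using th th1 tf ta tb td by (simp_all add: mat2_def) metis
      have h1m: "h1 = m"
      proof -
        have "h1 = Cmp K h1 (Cmp K \<alpha> ai)" using ai2 th1 by simp
        also have "\<dots> = Cmp K (Cmp K h1 \<alpha>) ai" using th1 ta tai by simp
        also have "\<dots> = m" unfolding eqs(2) m_def ..
        finally show ?thesis .
      qed
      have h2e: "h2 = Sub K g (Cmp K m f)" unfolding Sub_def
        by (rule add_solve_r[OF eqs(1)[unfolded h1m]]) (simp_all add: tm tf th1)
      have qe: "q = Sub K \<delta> (Cmp K m \<beta>)" unfolding Sub_def
        by (rule add_solve_l[OF eqs(3)[unfolded h1m]]) (simp_all add: tm tb th)
      have ye: "y = Sub K t (Cmp K m s)" unfolding Sub_def
        by (rule add_solve_l[OF eqs(4)[unfolded h1m]]) (simp_all add: tm tf th)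
      show "G = ?H" unfolding G hr h1m h2e qe ye ..
    qed
    show "let F = ?F; m = Cmp K (Dag K \<beta>) (mpinv K \<alpha>);
                H = (row K m (Sub K g (Cmp K m f)), Sub K \<delta> (Cmp K m \<beta>), Sub K t (Cmp K m s))
            in is_gcond K X A B C F H \<and> (\<forall>G. is_gcond K X A B C F G \<longrightarrow> G = H)"
      unfolding Let_def mm using ex un by blast
  qed
  show ?thesis unfolding inv_eq using cg cg_unique part2 unfolding m_def by blast
qed
end
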